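(* Let $\ell\ge 6$ and $w\ge 0$ be integers, let $A=\langle A_1,\dots,A_\ell\rangle$ and $B=\langle B_1,\dots,B_\ell\rangle$ be real sequences, and let $\delta:\mathbb{R}\times\mathbb{R}\to[0,\infty)$ be a symmetric pairwise cost function with $\delta(a,a)=0$ for all $a$. Suppose that for all reals $a,b,x,y$ with $a\le x\le y\le b$ or $a\ge x\ge y\ge b$ we have $\delta(a,b)\ge \delta(a,y)+\delta(b,x)-\delta(x,y)$. Define $$\mathrm{LB\_Webb}_w(A,B)=\mathrm{minlrpaths}(A,B)+\sum_{i=4}^{\ell-3}\kappa_i+\sum_{i=4}^{\ell-3}\gamma_i,$$ where $\kappa_i=\delta(A_i,\mathbb{U}^B_i)$ if $A_i>\mathbb{U}^B_i$, $\kappa_i=\delta(A_i,\mathbb{L}^B_i)$ if $A_i<\mathbb{L}^B_i$, and $\kappa_i=0$ otherwise; and $\gamma_i$ is given by the first applicable case among: (1) $\delta(B_i,\mathbb{U}^A_i)$ if $\mathrm{freeAbove}(i)$ and $B_i>\mathbb{U}^A_i$; (2) $\delta(B_i,\mathbb{L}^A_i)$ if $\mathrm{freeBelow}(i)$ and $B_i<\mathbb{L}^A_i$; (3) $\delta(B_i,\mathbb{U}^A_i)-\delta(\mathbb{U}^{\mathbb{L}^B}_i,\mathbb{U}^A_i)$ if not $\mathrm{freeAbove}(i)$ and $B_i>\mathbb{U}^{\mathbb{L}^B}_i>\mathbb{U}^A_i$; (4) $\delta(B_i,\mathbb{L}^A_i)-\delta(\mathbb{L}^{\mathbb{U}^B}_i,\mathbb{L}^A_i)$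 if not $\mathrm{freeBelow}(i)$ and $B_i<\mathbb{L}^{\mathbb{U}^B}_i<\mathbb{L}^A_i$; (5) $0$ otherwise. Then $\mathrm{LB\_Webb}_w(A,B)\le\mathrm{DTW}_w(A,B)$.
   Context: A warping path of $A$ and $B$ is a sequence of pairs $(i_1,j_1),\dots,(i_P,j_P)$ with $(i_1,j_1)=(1,1)$, $(i_P,j_P)=(\ell,\ell)$, and for each $1<k\le P$, $(i_{k-1},j_{k-1})\in\{(i_k-1,j_k),(i_k,j_k-1),(i_k-1,j_k-1)\}$. $\mathrm{DTW}_w(A,B)$ is the minimum of $\sum_{k=1}^P\delta(A_{i_k},B_{j_k})$ over all warping paths all of whose pairs satisfy $i_k-w\le j_k\le i_k+w$. For a real sequence $S$ of length $\ell$, its upper and lower envelopes with window $w$ are $\mathbb{U}^S_i=\max_{\max(1,i-w)\le j\le\min(\ell,i+w)}S_j$ and $\mathbb{L}^S_i=\min_{\max(1,i-w)\le j\le\min(\ell,i+w)}S_j$. $\mathbb{U}^{\mathbb{L}^B}$ is the upper envelope of the lower envelope of $B$, $\mathbb{L}^{\mathbb{U}^B}$ the lower envelope of the upper envelope of $B$, $\mathbb{L}^{\mathbb{U}^A}$ the lower envelope of the upper envelope of $A$, and $\mathbb{U}^{\mathbb{L}^A}$ the upper envelope of the lower envelope of $A$ (all with window $w$). $\mathrm{freeAbove}(j)$ holds iff for every $i$ with $4\le i\le\ell-3$ and $j-w\le i\le j+w$: $\mathbb{L}^B_i\le A_i\le\mathbb{U}^B_i$, or $A_i<\mathbb{L}^B_i\le\mathbb{L}^{\mathbb{U}^A}_i$.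 $\mathrm{freeBelow}(j)$ holds iff for every $i$ with $4\le i\le\ell-3$ and $j-w\le i\le j+w$: $\mathbb{L}^B_i\le A_i\le\mathbb{U}^B_i$, or $A_i>\mathbb{U}^B_i\ge\mathbb{U}^{\mathbb{L}^A}_i$. Writing $\delta_{i,j}=\delta(A_i,B_j)$, $\mathrm{minlrpaths}(A,B)=\delta_{1,1}+\delta_{\ell,\ell}+\min[\delta_{1,2}+\delta_{1,3},\ \delta_{1,2}+\delta_{2,3},\ \delta_{2,2}+\delta_{2,3},\ \delta_{2,2}+\delta_{3,3},\ \delta_{2,2}+\delta_{3,2},\ \delta_{2,1}+\delta_{3,2},\ \delta_{2,1}+\delta_{3,1}]+\min[\delta_{\ell,\ell-1}+\delta_{\ell,\ell-2},\ \delta_{\ell,\ell-1}+\delta_{\ell-1,\ell-2},\ \delta_{\ell-1,\ell-1}+\delta_{\ell-1,\ell-2},\ \delta_{\ell-1,\ell-1}+\delta_{\ell-2,\ell-2},\ \delta_{\ell-1,\ell-1}+\delta_{\ell-2,\ell-1},\ \delta_{\ell-1,\ell}+\delta_{\ell-2,\ell-1},\ \delta_{\ell-1,\ell}+\delta_{\ell-2,\ell}]$. *)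

theory Defs
  imports Complex_Main
begin

text \<open>Sequences of length l are functions nat => real, meaningful on indices 1..l.\<close>

definition warping_path :: "nat \<Rightarrow> (nat \<times> nat) list \<Rightarrow> bool" where
  "warping_path l ps \<longleftrightarrow> ps \<noteq> [] \<and> hd ps = (1,1) \<and> last ps = (l,l) \<and>
     (\<forall>k. 0 < k \<and> k < length ps \<longrightarrow>
        (let (a,b) = ps ! (k-1) in ps ! k \<in> {(a+1,b), (a,b+1), (a+1,b+1)}))"

definition in_band :: "nat \<Rightarrow> (nat \<times> nat) list \<Rightarrow> bool" where
  "in_band w ps \<longleftrightarrow> (\<forall>(i,j)\<in>set ps. j \<le> i + w \<and> i \<le> j + w)"

definition path_cost :: "(real \<Rightarrow> real \<Rightarrow> real) \<Rightarrow> (nat \<Rightarrow> real) \<Rightarrow> (nat \<Rightarrow> real)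
    \<Rightarrow> (nat \<times> nat) list \<Rightarrow> real" where
  "path_cost \<delta> A B ps = sum_list (map (\<lambda>(i,j). \<delta> (A i) (B j)) ps)"

definition DTW :: "(real \<Rightarrow> real \<Rightarrow> real) \<Rightarrow> nat \<Rightarrow> nat \<Rightarrow> (nat \<Rightarrow> real) \<Rightarrow> (nat \<Rightarrow> real) \<Rightarrow> real" where
  "DTW \<delta> l w A B = Min {path_cost \<delta> A B ps | ps. warping_path l ps \<and> in_band w ps}"

definition upper_env :: "nat \<Rightarrow> nat \<Rightarrow> (nat \<Rightarrow> real) \<Rightarrow> nat \<Rightarrow> real" where
  "upper_env l w S i = Max {S j | j. max 1 (i - w) \<le> j \<and> j \<le> min l (i + w)}"

definition lower_env :: "nat \<Rightarrow> nat \<Rightarrow> (nat \<Rightarrow> real) \<Rightarrow> nat \<Rightarrow> real" where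
  "lower_env l w S i = Min {S j | j. max 1 (i - w) \<le> j \<and> j \<le> min l (i + w)}"

definition freeAbove :: "nat \<Rightarrow> nat \<Rightarrow> (nat \<Rightarrow> real) \<Rightarrow> (nat \<Rightarrow> real) \<Rightarrow> nat \<Rightarrow> bool" where
  "freeAbove l w A B j \<longleftrightarrow> (\<forall>i. 4 \<le> i \<and> i + 3 \<le> l \<and> j \<le> i + w \<and> i \<le> j + w \<longrightarrow>
     (lower_env l w B i \<le> A i \<and> A i \<le> upper_env l w B i) \<or>
     (A i < lower_env l w B i \<and> lower_env l w B i \<le> lower_env l w (upper_env l w A) i))"

definition freeBelow :: "nat \<Rightarrow> nat \<Rightarrow> (nat \<Rightarrow> real) \<Rightarrow> (nat \<Rightarrow> real) \<Rightarrow> nat \<Rightarrow> bool" where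
  "freeBelow l w A B j \<longleftrightarrow> (\<forall>i. 4 \<le> i \<and> i + 3 \<le> l \<and> j \<le> i + w \<and> i \<le> j + w \<longrightarrow>
     (lower_env l w B i \<le> A i \<and> A i \<le> upper_env l w B i) \<or>
     (A i > upper_env l w B i \<and> upper_env l w B i \<ge> upper_env l w (lower_env l w A) i))"

definition minlrpaths :: "(real \<Rightarrow> real \<Rightarrow> real) \<Rightarrow> nat \<Rightarrow> (nat \<Rightarrow> real) \<Rightarrow> (nat \<Rightarrow> real) \<Rightarrow> real" where
  "minlrpaths \<delta> l A B =
    (let d = (\<lambda>i j. \<delta> (A i) (B j)) in
     d 1 1 + d l l
     + Min {d 1 2 + d 1 3, d 1 2 + d 2 3, d 2 2 + d 2 3, d 2 2 + d 3 3,
            d 2 2 + d 3 2, d 2 1 + d 3 2, d 2 1 + d 3 1}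
     + Min {d l (l-1) + d l (l-2), d l (l-1) + d (l-1) (l-2),
            d (l-1) (l-1) + d (l-1) (l-2), d (l-1) (l-1) + d (l-2) (l-2),
            d (l-1) (l-1) + d (l-2) (l-1), d (l-1) l + d (l-2) (l-1),
            d (l-1) l + d (l-2) l})"

definition kappa :: "(real \<Rightarrow> real \<Rightarrow> real) \<Rightarrow> nat \<Rightarrow> nat \<Rightarrow> (nat \<Rightarrow> real) \<Rightarrow> (nat \<Rightarrow> real) \<Rightarrow> nat \<Rightarrow> real" where
  "kappa \<delta> l w A B i =
    (if A i > upper_env l w B i then \<delta> (A i) (upper_env l w B i)
     else if A i < lower_env l w B i then \<delta> (A i) (lower_env l w B i)
     else 0)"

definition gamma :: "(real \<Rightarrow> real \<Rightarrow> real) \<Rightarrow> nat \<Rightarrow> nat \<Rightarrow> (nat \<Rightarrow> real) \<Rightarrow> (nat \<Rightarrow> real) \<Rightarrow> nat \<Rightarrow> real" where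
  "gamma \<delta> l w A B i =
    (let UA = upper_env l w A i; LA = lower_env l w A i;
         ULB = upper_env l w (lower_env l w B) i; LUB = lower_env l w (upper_env l w B) i in
     if freeAbove l w A B i \<and> B i > UA then \<delta> (B i) UA
     else if freeBelow l w A B i \<and> B i < LA then \<delta> (B i) LA
     else if \<not> freeAbove l w A B i \<and> B i > ULB \<and> ULB > UA then \<delta> (B i) UA - \<delta> ULB UA
     else if \<not> freeBelow l w A B i \<and> B i < LUB \<and> LUB < LA then \<delta> (B i) LA - \<delta> LUB LA
     else 0)"

definition LB_Webb :: "(real \<Rightarrow> real \<Rightarrow> real) \<Rightarrow> nat \<Rightarrow> nat \<Rightarrow> (nat \<Rightarrow> real) \<Rightarrow> (nat \<Rightarrow> real) \<Rightarrow> real" where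
  "LB_Webb \<delta> l w A B = minlrpaths \<delta> l A B
     + (\<Sum>i = 4..l-3. kappa \<delta> l w A B i) + (\<Sum>i = 4..l-3. gamma \<delta> l w A B i)"

end

theory Submission
  imports Defs
begin


lemma wp_step:
  assumes "warping_path l ps" "0 < k" "k < length ps"
  shows "ps!k = (fst (ps!(k-1)) + 1, snd (ps!(k-1))) \<or> ps!k = (fst (ps!(k-1)), snd (ps!(k-1)) + 1)
       \<or> ps!k = (fst (ps!(k-1)) + 1, snd (ps!(k-1)) + 1)"
proof -
  obtain a b where ab: "ps!(k-1) = (a,b)" by (cases "ps!(k-1)")
  have "let (a,b) = ps!(k-1) in ps ! k \<in> {(a+1,b), (a,b+1), (a+1,b+1)}"
    using assms unfolding warping_path_def by blast
  with ab show ?thesis by simp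
qed

lemma wp_first: "warping_path l ps \<Longrightarrow> ps!0 = (1,1)"
  unfolding warping_path_def by (metis hd_conv_nth)

lemma wp_last: "warping_path l ps \<Longrightarrow> ps!(length ps - 1) = (l,l)"
  unfolding warping_path_def by (metis last_conv_nth)

lemma wp_ne: "warping_path l ps \<Longrightarrow> length ps > 0"
  unfolding warping_path_def by simp

lemma wp_sum_bounds:
  assumes "warping_path l ps" "k < length ps"
  shows "k + 2 \<le> fst (ps!k) + snd (ps!k) \<and> fst (ps!k) + snd (ps!k) \<le> 2*k + 2"
  using assms(2)
proof (induction k)
  case 0 then show ?case using wp_first[OF assms(1)] by simp
next
  case (Suc k)
  then show ?case using wp_step[OF assms(1), of "Suc k"] by auto
qed

lemma wp_mono:
  assumes "warping_path l ps" "k \<le> k'" "k' < length ps"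
  shows "fst (ps!k) \<le> fst (ps!k') \<and> snd (ps!k) \<le> snd (ps!k')"
  using assms(2,3)
proof (induction k' rule: dec_induct)
  case base then show ?case by simp
next
  case (step m)
  then show ?case using wp_step[OF assms(1), of "Suc m"] by auto
qed

lemma wp_strict:
  assumes "warping_path l ps" "k < k'" "k' < length ps"
  shows "fst (ps!k) + snd (ps!k) < fst (ps!k') + snd (ps!k')"
proof -
  have "k \<le> k'-1" "k'-1 < length ps" using assms by auto
  from wp_mono[OF assms(1) this] wp_step[OF assms(1), of k'] assms show ?thesis by auto
qed

lemma wp_distinct: "warping_path l ps \<Longrightarrow> distinct ps"
  unfolding distinct_conv_nth
  by (metis linorder_neqE_nat nat_less_le wp_strict)

lemma wp_bounds:
  assumes "warping_path l ps" "p \<in> set ps"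
  shows "1 \<le> fst p \<and> fst p \<le> l \<and> 1 \<le> snd p \<and> snd p \<le> l"
proof -
  obtain k where k: "k < length ps" "p = ps!k" using assms(2) by (auto simp: in_set_conv_nth)
  show ?thesis
    using wp_mono[OF assms(1), of 0 k] wp_mono[OF assms(1), of k "length ps - 1"]
      wp_first[OF assms(1)] wp_last[OF assms(1)] k by auto
qed

lemma wp_len:
  assumes "warping_path l ps"
  shows "l \<le> length ps \<and> length ps \<le> 2*l"
proof -
  have "length ps - 1 < length ps" using wp_ne[OF assms] by simp
  from wp_sum_bounds[OF assms this] wp_last[OF assms]
  have "length ps - 1 + 2 \<le> l + l" "l + l \<le> 2*(length ps - 1) + 2" by simp_all
  with wp_ne[OF assms] show ?thesis by arith
qed

lemma wp_row:
  assumes "warping_path l ps" "1 \<le> v" "v \<le> l"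
  shows "\<exists>j. (v,j) \<in> set ps"
proof -
  have H: "\<forall>v. 1 \<le> v \<and> v \<le> fst (ps!k) \<longrightarrow> (\<exists>k'\<le>k. fst (ps!k') = v)" if "k < length ps" for k
    using that
  proof (induction k)
    case 0 then show ?case using wp_first[OF assms(1)] by auto
  next
    case (Suc k)
    show ?case
    proof (intro allI impI)
      fix v assume v: "1 \<le> v \<and> v \<le> fst (ps ! Suc k)"
      show "\<exists>k'\<le>Suc k. fst (ps ! k') = v"
      proof (cases "v \<le> fst (ps!k)")
        case True then show ?thesis using Suc v by (meson Suc_lessD le_Suc_eq)
      next
        case False then have "v = fst (ps ! Suc k)" using wp_step[OF assms(1), of "Suc k"] Suc v by auto
        then show ?thesis by auto
      qed
    qed
  qed
  have "length ps - 1 < length ps" using wp_ne[OF assms(1)] by simp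
  from H[OF this] have "\<exists>k'\<le>length ps - 1. fst (ps!k') = v"
    using wp_last[OF assms(1)] assms by auto
  then obtain k' where "k' < length ps" "fst (ps!k') = v"
    using wp_ne[OF assms(1)] by (metis One_nat_def Suc_pred le_imp_less_Suc)
  then show ?thesis by (metis nth_mem prod.collapse)
qed

lemma wp_col:
  assumes "warping_path l ps" "1 \<le> v" "v \<le> l"
  shows "\<exists>i. (i,v) \<in> set ps"
proof -
  have H: "\<forall>v. 1 \<le> v \<and> v \<le> snd (ps!k) \<longrightarrow> (\<exists>k'\<le>k. snd (ps!k') = v)" if "k < length ps" for k
    using that
  proof (induction k)
    case 0 then show ?case using wp_first[OF assms(1)] by auto
  next
    case (Suc k)
    show ?case
    proof (intro allI impI)
      fix v assume v: "1 \<le> v \<and> v \<le> snd (ps ! Suc k)"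
      show "\<exists>k'\<le>Suc k. snd (ps ! k') = v"
      proof (cases "v \<le> snd (ps!k)")
        case True then show ?thesis using Suc v by (meson Suc_lessD le_Suc_eq)
      next
        case False then have "v = snd (ps ! Suc k)" using wp_step[OF assms(1), of "Suc k"] Suc v by auto
        then show ?thesis by auto
      qed
    qed
  qed
  have "length ps - 1 < length ps" using wp_ne[OF assms(1)] by simp
  from H[OF this] have "\<exists>k'\<le>length ps - 1. snd (ps!k') = v"
    using wp_last[OF assms(1)] assms by auto
  then obtain k' where "k' < length ps" "snd (ps!k') = v"
    using wp_ne[OF assms(1)] by (metis One_nat_def Suc_pred le_imp_less_Suc)
  then show ?thesis by (metis nth_mem prod.collapse)
qed

lemma wp_back:
  assumes "warping_path l ps" "0 < k" "k < length ps"
  shows "ps!(k-1) = (fst (ps!k) - 1, snd (ps!k)) \<or> ps!(k-1) = (fst (ps!k), snd (ps!k) - 1)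
       \<or> ps!(k-1) = (fst (ps!k) - 1, snd (ps!k) - 1)"
  using wp_step[OF assms] by (cases "ps!(k-1)") auto

lemma left_aux:
  fixes p1 p2 p3 :: "nat \<times> nat"
  assumes "p1 = (2,1) \<or> p1 = (1,2) \<or> p1 = (2,2)"
   "p2 = (fst p1+1, snd p1) \<or> p2 = (fst p1, snd p1+1) \<or> p2 = (fst p1+1, snd p1+1)"
   "p3 = (fst p2+1, snd p2) \<or> p3 = (fst p2, snd p2+1) \<or> p3 = (fst p2+1, snd p2+1)"
   "p1 \<in> S" "p2 \<in> S" "p3 \<in> S"
  shows "((1,2)\<in>S \<and> (1,3)\<in>S) \<or> ((1,2)\<in>S \<and> (2,3)\<in>S) \<or>
         ((2,2)\<in>S \<and> (2,3)\<in>S) \<or> ((2,2)\<in>S \<and> (3,3)\<in>S) \<or>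
         ((2,2)\<in>S \<and> (3,2)\<in>S) \<or> ((2,1)\<in>S \<and> (3,2)\<in>S) \<or>
         ((2,1)\<in>S \<and> (3,1)\<in>S)"
  using assms(1)
proof (elim disjE)
  assume "p1 = (2,1)"
  with assms(2-6) show ?thesis by (elim disjE) (simp_all add: numeral_eq_Suc)
next
  assume "p1 = (1,2)"
  with assms(2-6) show ?thesis by (elim disjE) (simp_all add: numeral_eq_Suc)
next
  assume "p1 = (2,2)"
  with assms(2-6) show ?thesis by (elim disjE) (simp_all add: numeral_eq_Suc)
qed

lemma right_aux:
  fixes p1 p2 p3 :: "nat \<times> nat" and l :: nat
  assumes "l \<ge> 6" "p1 = (l-1,l) \<or> p1 = (l,l-1) \<or> p1 = (l-1,l-1)"
   "p2 = (fst p1-1, snd p1) \<or> p2 = (fst p1, snd p1-1) \<or> p2 = (fst p1-1, snd p1-1)"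
   "p3 = (fst p2-1, snd p2) \<or> p3 = (fst p2, snd p2-1) \<or> p3 = (fst p2-1, snd p2-1)"
   "p1 \<in> S" "p2 \<in> S" "p3 \<in> S"
  shows "((l,l-1)\<in>S \<and> (l,l-2)\<in>S) \<or> ((l,l-1)\<in>S \<and> (l-1,l-2)\<in>S) \<or>
         ((l-1,l-1)\<in>S \<and> (l-1,l-2)\<in>S) \<or> ((l-1,l-1)\<in>S \<and> (l-2,l-2)\<in>S) \<or>
         ((l-1,l-1)\<in>S \<and> (l-2,l-1)\<in>S) \<or> ((l-1,l)\<in>S \<and> (l-2,l-1)\<in>S) \<or>
         ((l-1,l)\<in>S \<and> (l-2,l)\<in>S)"
  using assms(2)
proof (elim disjE)
  assume "p1 = (l-1,l)"
  with assms(3-7) show ?thesis by (elim disjE) (simp_all add: numeral_eq_Suc)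
next
  assume "p1 = (l,l-1)"
  with assms(3-7) show ?thesis by (elim disjE) (simp_all add: numeral_eq_Suc)
next
  assume "p1 = (l-1,l-1)"
  with assms(3-7) show ?thesis by (elim disjE) (simp_all add: numeral_eq_Suc)
qed
lemma wp_left:
  assumes "warping_path l ps" "l \<ge> 6"
  shows "((1,2)\<in>set ps \<and> (1,3)\<in>set ps) \<or> ((1,2)\<in>set ps \<and> (2,3)\<in>set ps) \<or>
         ((2,2)\<in>set ps \<and> (2,3)\<in>set ps) \<or> ((2,2)\<in>set ps \<and> (3,3)\<in>set ps) \<or>
         ((2,2)\<in>set ps \<and> (3,2)\<in>set ps) \<or> ((2,1)\<in>set ps \<and> (3,2)\<in>set ps) \<or>
         ((2,1)\<in>set ps \<and> (3,1)\<in>set ps)"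
proof -
  have n: "length ps \<ge> 6" using wp_len[OF assms(1)] assms(2) by simp
  have m: "ps!1 \<in> set ps" "ps!2 \<in> set ps" "ps!3 \<in> set ps" using n by auto
  have s1: "ps!1 \<in> {(2,1),(1,2),(2,2)}" using wp_step[OF assms(1), of 1] wp_first[OF assms(1)] n by auto
  have s2: "ps!2 = (fst (ps!1) + 1, snd (ps!1)) \<or> ps!2 = (fst (ps!1), snd (ps!1) + 1)
       \<or> ps!2 = (fst (ps!1) + 1, snd (ps!1) + 1)" using wp_step[OF assms(1), of 2] n by auto
  have s3: "ps!3 = (fst (ps!2) + 1, snd (ps!2)) \<or> ps!3 = (fst (ps!2), snd (ps!2) + 1)
       \<or> ps!3 = (fst (ps!2) + 1, snd (ps!2) + 1)" using wp_step[OF assms(1), of 3] n by auto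
  show ?thesis by (rule left_aux[OF _ s2 s3 m]) (use s1 in simp)
qed

lemma wp_right:
  assumes "warping_path l ps" "l \<ge> 6"
  shows "((l,l-1)\<in>set ps \<and> (l,l-2)\<in>set ps) \<or> ((l,l-1)\<in>set ps \<and> (l-1,l-2)\<in>set ps) \<or>
         ((l-1,l-1)\<in>set ps \<and> (l-1,l-2)\<in>set ps) \<or> ((l-1,l-1)\<in>set ps \<and> (l-2,l-2)\<in>set ps) \<or>
         ((l-1,l-1)\<in>set ps \<and> (l-2,l-1)\<in>set ps) \<or> ((l-1,l)\<in>set ps \<and> (l-2,l-1)\<in>set ps) \<or>
         ((l-1,l)\<in>set ps \<and> (l-2,l)\<in>set ps)"
proof -
  define m where "m = length ps - 1"
  have n: "m \<ge> 5" "m < length ps" using wp_len[OF assms(1)] assms(2) unfolding m_def by auto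
  have m: "ps!(m-1) \<in> set ps" "ps!(m-2) \<in> set ps" "ps!(m-3) \<in> set ps" using n by auto
  have l: "ps!m = (l,l)" using wp_last[OF assms(1)] m_def by simp
  have s1: "ps!(m-1) \<in> {(l-1,l),(l,l-1),(l-1,l-1)}" using wp_back[OF assms(1), of m] l n by auto
  have s2: "ps!(m-2) = (fst (ps!(m-1)) - 1, snd (ps!(m-1))) \<or> ps!(m-2) = (fst (ps!(m-1)), snd (ps!(m-1)) - 1)
       \<or> ps!(m-2) = (fst (ps!(m-1)) - 1, snd (ps!(m-1)) - 1)" using wp_back[OF assms(1), of "m-1"] n
    by (simp add: numeral_eq_Suc)
  have s3: "ps!(m-3) = (fst (ps!(m-2)) - 1, snd (ps!(m-2))) \<or> ps!(m-3) = (fst (ps!(m-2)), snd (ps!(m-2)) - 1)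
       \<or> ps!(m-3) = (fst (ps!(m-2)) - 1, snd (ps!(m-2)) - 1)" using wp_back[OF assms(1), of "m-2"] n
    by (simp add: numeral_eq_Suc)
  show ?thesis by (rule right_aux[OF assms(2) _ s2 s3 m]) (use s1 in simp)
qed



lemma env_fin: fixes S :: "nat \<Rightarrow> real" shows "finite {S j |j. max 1 (i - w) \<le> j \<and> j \<le> min l (i + w)}"
proof -
  have e: "{S j |j. max 1 (i - w) \<le> j \<and> j \<le> min l (i + w)} = S ` {j. max 1 (i - w) \<le> j \<and> j \<le> min l (i + w)}" by blast
  have "finite {j. max 1 (i - w) \<le> j \<and> j \<le> min l (i + w)}"
    by (rule finite_subset[of _ "{..min l (i + w)}"]) auto
  then show ?thesis unfolding e by simp
qed

lemma env_upper: "1 \<le> j \<Longrightarrow> j \<le> l \<Longrightarrow> i \<le> j + w \<Longrightarrow> j \<le> i + w \<Longrightarrow> S j \<le> upper_env l w S i"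
  unfolding upper_env_def by (rule Max_ge[OF env_fin]) auto

lemma env_lower: "1 \<le> j \<Longrightarrow> j \<le> l \<Longrightarrow> i \<le> j + w \<Longrightarrow> j \<le> i + w \<Longrightarrow> lower_env l w S i \<le> S j"
  unfolding lower_env_def by (rule Min_le[OF env_fin]) auto

context
  fixes \<delta> :: "real \<Rightarrow> real \<Rightarrow> real"
  assumes pos: "\<And>a b. \<delta> a b \<ge> 0"
    and sym: "\<And>a b. \<delta> a b = \<delta> b a"
    and refl: "\<And>a. \<delta> a a = 0"
    and q: "\<And>a b x y. (a \<le> x \<and> x \<le> y \<and> y \<le> b) \<or> (a \<ge> x \<and> x \<ge> y \<and> y \<ge> b) \<Longrightarrow>
           \<delta> a b \<ge> \<delta> a y + \<delta> b x - \<delta> x y"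
begin

lemma tri: "x \<le> y \<Longrightarrow> y \<le> z \<Longrightarrow> \<delta> x y + \<delta> y z \<le> \<delta> x z"
  using q[of x y y z] refl sym by simp

lemma mono1: "x \<le> y \<Longrightarrow> y \<le> z \<Longrightarrow> \<delta> x y \<le> \<delta> x z"
  using tri[of x y z] pos[of y z] by simp

lemma mono2: "x \<le> y \<Longrightarrow> y \<le> z \<Longrightarrow> \<delta> y z \<le> \<delta> x z"
  using tri[of x y z] pos[of x y] by simp

lemma gnn:
  fixes b UA LA ULB LUB :: real
  shows "0 \<le> (if fa \<and> b > UA then \<delta> b UA
     else if fb \<and> b < LA then \<delta> b LA
     else if \<not> fa \<and> b > ULB \<and> ULB > UA then \<delta> b UA - \<delta> ULB UA
     else if \<not> fb \<and> b < LUB \<and> LUB < LA then \<delta> b LA - \<delta> LUB LA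
     else 0)"
  using pos mono1[of UA ULB b] mono2[of b LUB LA] sym by auto

lemma abstract:
  fixes a b Li Ui UA LA LUA ULA ULB LUB :: real
  assumes "Li \<le> b" "b \<le> Ui" "LA \<le> a" "a \<le> UA" "LUA \<le> UA" "LA \<le> ULA" "Li \<le> ULB" "LUB \<le> Ui"
    and fa: "fa \<Longrightarrow> iR \<Longrightarrow> (Li \<le> a \<and> a \<le> Ui) \<or> (a < Li \<and> Li \<le> LUA)"
    and fb: "fb \<Longrightarrow> iR \<Longrightarrow> (Li \<le> a \<and> a \<le> Ui) \<or> (a > Ui \<and> Ui \<ge> ULA)"
  shows "(if iR then (if a > Ui then \<delta> a Ui else if a < Li then \<delta> a Li else 0) else 0)
   + (if jR then (if fa \<and> b > UA then \<delta> b UA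
     else if fb \<and> b < LA then \<delta> b LA
     else if \<not> fa \<and> b > ULB \<and> ULB > UA then \<delta> b UA - \<delta> ULB UA
     else if \<not> fb \<and> b < LUB \<and> LUB < LA then \<delta> b LA - \<delta> LUB LA
     else 0) else 0) \<le> \<delta> a b"
proof -
  define K where "K = (if a > Ui then \<delta> a Ui else if a < Li then \<delta> a Li else 0)"
  define G where "G = (if fa \<and> b > UA then \<delta> b UA
     else if fb \<and> b < LA then \<delta> b LA
     else if \<not> fa \<and> b > ULB \<and> ULB > UA then \<delta> b UA - \<delta> ULB UA
     else if \<not> fb \<and> b < LUB \<and> LUB < LA then \<delta> b LA - \<delta> LUB LA
     else 0)"
  have K0: "K \<ge> 0" unfolding K_def using pos by simp
  have G0: "G \<ge> 0" unfolding G_def using pos mono1[of UA ULB b] mono2[of b LUB LA] sym by auto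
  have Kle: "K \<le> \<delta> a b" unfolding K_def
    using mono2[of b Ui a] mono1[of a Li b] sym[of a Ui] sym[of a b] pos[of a b] assms(1,2) by auto
  have Gle: "G \<le> \<delta> a b" unfolding G_def
    using mono2[of a UA b] mono1[of b LA a] sym[of b UA] sym[of b a] assms(3,4) pos[of a b] pos[of LUB LA] pos[of ULB UA] by auto
  have both: "K + G \<le> \<delta> a b" if iR
  proof -
    consider (g1) "fa \<and> b > UA" | (g2) "\<not>(fa \<and> b > UA)" "fb \<and> b < LA"
      | (g3) "\<not>(fa \<and> b > UA)" "\<not>(fb \<and> b < LA)" "\<not> fa \<and> b > ULB \<and> ULB > UA"
      | (g4) "\<not>(fa \<and> b > UA)" "\<not>(fb \<and> b < LA)" "\<not>(\<not> fa \<and> b > ULB \<and> ULB > UA)"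
             "\<not> fb \<and> b < LUB \<and> LUB < LA"
      | (g5) "\<not>(fa \<and> b > UA)" "\<not>(fb \<and> b < LA)" "\<not>(\<not> fa \<and> b > ULB \<and> ULB > UA)"
             "\<not>(\<not> fb \<and> b < LUB \<and> LUB < LA)" by blast
    then show ?thesis
    proof cases
      case g1
      then have G: "G = \<delta> b UA" unfolding G_def by auto
      show ?thesis
      proof (cases "a < Li")
        case True
        then have "Li \<le> LUA" using fa g1 that by auto
        then have K: "K = \<delta> a Li" unfolding K_def using True assms by auto
        have "\<delta> a Li + \<delta> Li b \<le> \<delta> a b" using tri[of a Li b] True assms by simp
        moreover have "\<delta> UA b \<le> \<delta> Li b" using mono2[of Li UA b] `Li \<le> LUA` assms g1 by simp
        ultimately show ?thesis using K G sym by (metis add_left_mono order_trans)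
      next
        case False
        then have "K = 0" unfolding K_def using g1 assms by auto
        then show ?thesis using Gle by simp
      qed
    next
      case g2
      then have G: "G = \<delta> b LA" unfolding G_def by auto
      show ?thesis
      proof (cases "a > Ui")
        case True
        then have "Ui \<ge> ULA" using fb g2 that by auto
        then have K: "K = \<delta> a Ui" unfolding K_def using True assms by auto
        have "\<delta> b Ui + \<delta> Ui a \<le> \<delta> b a" using tri[of b Ui a] True assms by simp
        moreover have "\<delta> b LA \<le> \<delta> b Ui" using mono1[of b LA Ui] `Ui \<ge> ULA` assms g2 by simp
        ultimately show ?thesis using K G sym by (smt (verit))
      next
        case False
        then have "K = 0" unfolding K_def using g2 assms by auto
        then show ?thesis using Gle by simp
      qed
    next
      case g3
      then have G: "G = \<delta> b UA - \<delta> ULB UA" unfolding G_def by auto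
      show ?thesis
      proof (cases "a < Li")
        case True
        then have K: "K = \<delta> a Li" unfolding K_def using assms by auto
        show ?thesis
        proof (cases "UA \<le> Li")
          case True
          have "\<delta> a b \<ge> \<delta> a Li + \<delta> b UA - \<delta> UA Li" using q[of a UA Li b] True `a < Li` assms by simp
          moreover have "\<delta> UA Li \<le> \<delta> UA ULB" using mono1[of UA Li ULB] True assms by simp
          ultimately show ?thesis using K G sym[of ULB UA] by simp
        next
          case False
          have "\<delta> a Li + \<delta> Li b \<le> \<delta> a b" using tri[of a Li b] `a < Li` assms by simp
          moreover have "\<delta> UA b \<le> \<delta> Li b" using mono2[of Li UA b] False assms g3 by simp
          ultimately show ?thesis using K G sym[of UA b] pos[of ULB UA] by simp
        qed
      next
        case False
        then have "K = 0" unfolding K_def using g3 assms by auto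
        then show ?thesis using Gle by simp
      qed
    next
      case g4
      then have G: "G = \<delta> b LA - \<delta> LUB LA" unfolding G_def by auto
      show ?thesis
      proof (cases "a > Ui")
        case True
        then have K: "K = \<delta> a Ui" unfolding K_def using assms by auto
        show ?thesis
        proof (cases "Ui \<le> LA")
          case True
          have "\<delta> b a \<ge> \<delta> b LA + \<delta> a Ui - \<delta> Ui LA" using q[of b Ui LA a] True `a > Ui` assms by simp
          moreover have "\<delta> Ui LA \<le> \<delta> LUB LA" using mono2[of LUB Ui LA] True assms by simp
          ultimately show ?thesis using K G sym[of b a] by simp
        next
          case False
          have "\<delta> b Ui + \<delta> Ui a \<le> \<delta> b a" using tri[of b Ui a] `a > Ui` assms by simp
          moreover have "\<delta> b LA \<le> \<delta> b Ui" using mono1[of b LA Ui] False assms g4 by simp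
          ultimately show ?thesis using K G sym[of b a] sym[of Ui a] pos[of LUB LA] by simp
        qed
      next
        case False
        then have "K = 0" unfolding K_def using g4 assms by auto
        then show ?thesis using Gle by simp
      qed
    next
      case g5
      then have "G = 0" unfolding G_def by auto
      then show ?thesis using Kle by simp
    qed
  qed
  show ?thesis
    using both K0 G0 Kle Gle pos[of a b] unfolding K_def[symmetric] G_def[symmetric] by auto
qed


lemma gamma_nonneg: "0 \<le> gamma \<delta> l w A B j"
  unfolding gamma_def Let_def by (rule gnn)

lemma kappa_nonneg: "0 \<le> kappa \<delta> l w A B i"
  unfolding kappa_def using pos by simp

lemma pointwise:
  assumes "1 \<le> i" "i \<le> l" "1 \<le> j" "j \<le> l" "j \<le> i + w" "i \<le> j + w"
  shows "(if 4 \<le> i \<and> i + 3 \<le> l then kappa \<delta> l w A B i else 0)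
       + (if 4 \<le> j \<and> j + 3 \<le> l then gamma \<delta> l w A B j else 0) \<le> \<delta> (A i) (B j)"
  unfolding kappa_def gamma_def Let_def
proof (rule abstract)
  show "lower_env l w B i \<le> B j" by (rule env_lower) (use assms in auto)
  show "B j \<le> upper_env l w B i" by (rule env_upper) (use assms in auto)
  show "lower_env l w A j \<le> A i" by (rule env_lower) (use assms in auto)
  show "A i \<le> upper_env l w A j" by (rule env_upper) (use assms in auto)
  show "lower_env l w (upper_env l w A) i \<le> upper_env l w A j" by (rule env_lower) (use assms in auto)
  show "lower_env l w A j \<le> upper_env l w (lower_env l w A) i" by (rule env_upper) (use assms in auto)
  show "lower_env l w B i \<le> upper_env l w (lower_env l w B) j" by (rule env_upper) (use assms in auto)
  show "lower_env l w (upper_env l w B) j \<le> upper_env l w B i" by (rule env_lower) (use assms in auto)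
  show "freeAbove l w A B j \<Longrightarrow> 4 \<le> i \<and> i + 3 \<le> l \<Longrightarrow>
    (lower_env l w B i \<le> A i \<and> A i \<le> upper_env l w B i) \<or>
    (A i < lower_env l w B i \<and> lower_env l w B i \<le> lower_env l w (upper_env l w A) i)"
    unfolding freeAbove_def using assms by blast
  show "freeBelow l w A B j \<Longrightarrow> 4 \<le> i \<and> i + 3 \<le> l \<Longrightarrow>
    (lower_env l w B i \<le> A i \<and> A i \<le> upper_env l w B i) \<or>
    (A i > upper_env l w B i \<and> upper_env l w B i \<ge> upper_env l w (lower_env l w A) i)"
    unfolding freeBelow_def using assms by blast
qed

end



lemma three_le:
  fixes f :: "'a \<Rightarrow> real"
  assumes "finite S" "\<And>x. x \<in> S \<Longrightarrow> 0 \<le> f x" "p \<in> S" "q \<in> S" "r \<in> S" "distinct [p,q,r]"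
  shows "f p + f q + f r \<le> sum f S"
proof -
  have "sum f {p,q,r} \<le> sum f S" by (rule sum_mono2) (use assms in auto)
  moreover have "sum f {p,q,r} = f p + f q + f r" using assms(6) by simp
  ultimately show ?thesis by simp
qed

lemma diag_wp:
  assumes "l \<ge> 1"
  shows "warping_path l (map (\<lambda>k. (k,k)) [1..<l+1]) \<and> in_band w (map (\<lambda>k. (k,k)) [1..<l+1])"
proof -
  define D where "D = map (\<lambda>k. (k,k)) [1..<l+1]"
  have len: "length D = l" unfolding D_def by simp
  have nth: "\<And>k. k < l \<Longrightarrow> D!k = (k+1,k+1)" unfolding D_def by (simp del: upt_Suc)
  have ne: "D \<noteq> []" using len assms by auto
  have "hd D = (1,1)" using nth[of 0] assms ne by (simp add: hd_conv_nth)
  moreover have "last D = (l,l)" using nth[of "l-1"] assms ne len by (simp add: last_conv_nth)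
  moreover have "\<forall>k. 0 < k \<and> k < length D \<longrightarrow>
        (let (a,b) = D ! (k-1) in D ! k \<in> {(a+1,b), (a,b+1), (a+1,b+1)})"
    using nth len by auto
  moreover have "in_band w D" unfolding in_band_def D_def by auto
  ultimately show ?thesis using ne unfolding warping_path_def D_def[symmetric] by blast
qed

context
  fixes \<delta> :: "real \<Rightarrow> real \<Rightarrow> real"
  assumes pos: "\<And>a b. \<delta> a b \<ge> 0"
    and sym: "\<And>a b. \<delta> a b = \<delta> b a"
    and refl: "\<And>a. \<delta> a a = 0"
    and q: "\<And>a b x y. (a \<le> x \<and> x \<le> y \<and> y \<le> b) \<or> (a \<ge> x \<and> x \<ge> y \<and> y \<ge> b) \<Longrightarrow>
           \<delta> a b \<ge> \<delta> a y + \<delta> b x - \<delta> x y"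
begin

lemma main_path:
  assumes l6: "l \<ge> 6" and wp: "warping_path l ps" and band: "in_band w ps"
  shows "LB_Webb \<delta> l w A B \<le> path_cost \<delta> A B ps"
proof -
  define c where "c = (\<lambda>(i,j). \<delta> (A i) (B j))"
  define P where "P = set ps"
  define iR where "iR = (\<lambda>k::nat. 4 \<le> k \<and> k + 3 \<le> l)"
  define Lt where "Lt = P \<inter> {p. fst p \<le> 3 \<and> snd p \<le> 3}"
  define Rt where "Rt = P \<inter> {p. l - 2 \<le> fst p \<and> l - 2 \<le> snd p}"
  define Md where "Md = P \<inter> {p. iR (fst p) \<or> iR (snd p)}"
  define kp where "kp = (\<lambda>i. if iR i then kappa \<delta> l w A B i else 0)"
  define gp where "gp = (\<lambda>j. if iR j then gamma \<delta> l w A B j else 0)"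
  have fin: "finite P" unfolding P_def by simp
  have c0: "\<And>p. 0 \<le> c p" unfolding c_def using pos by (simp add: case_prod_beta)
  have cost: "path_cost \<delta> A B ps = sum c P"
    unfolding path_cost_def c_def P_def by (rule sum_list_distinct_conv_sum_set[OF wp_distinct[OF wp]])
  have sub: "Lt \<union> Rt \<union> Md \<subseteq> P" unfolding Lt_def Rt_def Md_def by auto
  have d1: "Lt \<inter> Rt = {}" unfolding Lt_def Rt_def using l6 by auto
  have d2: "(Lt \<union> Rt) \<inter> Md = {}" unfolding Lt_def Rt_def Md_def iR_def using l6 by auto
  have finL: "finite Lt" "finite Rt" "finite Md" using fin unfolding Lt_def Rt_def Md_def by auto
  have "sum c (Lt \<union> Rt \<union> Md) \<le> sum c P" by (rule sum_mono2[OF fin sub]) (use c0 in auto)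
  moreover have "sum c (Lt \<union> Rt \<union> Md) = sum c Lt + sum c Rt + sum c Md"
    using d1 d2 finL by (simp add: sum.union_disjoint)
  ultimately have spl: "sum c Lt + sum c Rt + sum c Md \<le> sum c P" by simp

  define SL where "SL = {\<delta> (A 1) (B 2) + \<delta> (A 1) (B 3), \<delta> (A 1) (B 2) + \<delta> (A 2) (B 3),
            \<delta> (A 2) (B 2) + \<delta> (A 2) (B 3), \<delta> (A 2) (B 2) + \<delta> (A 3) (B 3),
            \<delta> (A 2) (B 2) + \<delta> (A 3) (B 2), \<delta> (A 2) (B 1) + \<delta> (A 3) (B 2),
            \<delta> (A 2) (B 1) + \<delta> (A 3) (B 1)}"
  define SR where "SR = {\<delta> (A l) (B (l-1)) + \<delta> (A l) (B (l-2)), \<delta> (A l) (B (l-1)) + \<delta> (A (l-1)) (B (l-2)),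
            \<delta> (A (l-1)) (B (l-1)) + \<delta> (A (l-1)) (B (l-2)), \<delta> (A (l-1)) (B (l-1)) + \<delta> (A (l-2)) (B (l-2)),
            \<delta> (A (l-1)) (B (l-1)) + \<delta> (A (l-2)) (B (l-1)), \<delta> (A (l-1)) (B l) + \<delta> (A (l-2)) (B (l-1)),
            \<delta> (A (l-1)) (B l) + \<delta> (A (l-2)) (B l)}"
  define MinLt where "MinLt = Min SL"
  define MinRt where "MinRt = Min SR"
  have mlr: "minlrpaths \<delta> l A B = c (1,1) + c (l,l) + MinLt + MinRt"
    unfolding minlrpaths_def MinLt_def MinRt_def SL_def SR_def c_def Let_def by (simp only: prod.case)
  have SLall: "\<forall>x\<in>SL. MinLt \<le> x" unfolding MinLt_def
    by (intro ballI Min_le) (simp_all add: SL_def)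
  have SRall: "\<forall>x\<in>SR. MinRt \<le> x" unfolding MinRt_def
    by (intro ballI Min_le) (simp_all add: SR_def)
  have one: "(1,1) \<in> P" using wp_first[OF wp] wp_ne[OF wp] unfolding P_def by (metis nth_mem)
  have ll: "(l,l) \<in> P" using wp_last[OF wp] wp_ne[OF wp] unfolding P_def
    by (metis diff_less nth_mem zero_less_one)
  have left: "c (1,1) + MinLt \<le> sum c Lt"
  proof -
    have L: "\<exists>p q. p \<in> P \<and> q \<in> P \<and> fst p \<le> 3 \<and> snd p \<le> 3 \<and> fst q \<le> 3 \<and> snd q \<le> 3
       \<and> distinct [(1,1),p,q] \<and> MinLt \<le> c p + c q"
      using wp_left[OF wp l6] SLall unfolding P_def[symmetric] SL_def
      apply (elim disjE)
      apply (rule exI[of _ "(1,2)"], rule exI[of _ "(1,3)"], simp add: c_def)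
      apply (rule exI[of _ "(1,2)"], rule exI[of _ "(2,3)"], simp add: c_def)
      apply (rule exI[of _ "(2,2)"], rule exI[of _ "(2,3)"], simp add: c_def)
      apply (rule exI[of _ "(2,2)"], rule exI[of _ "(3,3)"], simp add: c_def)
      apply (rule exI[of _ "(2,2)"], rule exI[of _ "(3,2)"], simp add: c_def)
      apply (rule exI[of _ "(2,1)"], rule exI[of _ "(3,2)"], simp add: c_def)
      apply (rule exI[of _ "(2,1)"], rule exI[of _ "(3,1)"], simp add: c_def)
      done
    then obtain p q where pq: "p \<in> P" "q \<in> P" "fst p \<le> 3" "snd p \<le> 3" "fst q \<le> 3" "snd q \<le> 3"
      "distinct [(1,1),p,q]" "MinLt \<le> c p + c q" by blast
    have "c (1,1) + c p + c q \<le> sum c Lt"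
      by (rule three_le) (use pq one finL c0 in \<open>auto simp: Lt_def\<close>)
    then show ?thesis using pq by simp
  qed
  have right: "c (l,l) + MinRt \<le> sum c Rt"
  proof -
    have ar: "l - 2 \<le> l - 1" "l - 2 \<le> l - Suc 0" "l - 2 \<le> l" "l - 1 \<le> l" "l - Suc 0 \<le> l"
      "l \<noteq> l - 1" "l \<noteq> l - Suc 0" "l \<noteq> l - 2" "l - 1 \<noteq> l - 2" "l - Suc 0 \<noteq> l - 2"
      "l - 1 \<noteq> l" "l - Suc 0 \<noteq> l" "l - 2 \<noteq> l" "l - 2 \<noteq> l - 1" "l - 2 \<noteq> l - Suc 0"
      using l6 by auto
    have L: "\<exists>p q. p \<in> P \<and> q \<in> P \<and> l - 2 \<le> fst p \<and> l - 2 \<le> snd p \<and> l - 2 \<le> fst q \<and> l - 2 \<le> snd q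
       \<and> distinct [(l,l),p,q] \<and> MinRt \<le> c p + c q"
      using wp_right[OF wp l6] SRall unfolding P_def[symmetric] SR_def
      apply (elim disjE)
      apply (rule exI[of _ "(l,l-1)"], rule exI[of _ "(l,l-2)"], simp add: c_def ar)
      apply (rule exI[of _ "(l,l-1)"], rule exI[of _ "(l-1,l-2)"], simp add: c_def ar)
      apply (rule exI[of _ "(l-1,l-1)"], rule exI[of _ "(l-1,l-2)"], simp add: c_def ar)
      apply (rule exI[of _ "(l-1,l-1)"], rule exI[of _ "(l-2,l-2)"], simp add: c_def ar)
      apply (rule exI[of _ "(l-1,l-1)"], rule exI[of _ "(l-2,l-1)"], simp add: c_def ar)
      apply (rule exI[of _ "(l-1,l)"], rule exI[of _ "(l-2,l-1)"], simp add: c_def ar)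
      apply (rule exI[of _ "(l-1,l)"], rule exI[of _ "(l-2,l)"], simp add: c_def ar)
      done
    then obtain p q where pq: "p \<in> P" "q \<in> P" "l - 2 \<le> fst p" "l - 2 \<le> snd p" "l - 2 \<le> fst q" "l - 2 \<le> snd q"
      "distinct [(l,l),p,q]" "MinRt \<le> c p + c q" by blast
    have "c (l,l) + c p + c q \<le> sum c Rt"
      by (rule three_le) (use pq ll finL c0 in \<open>auto simp: Rt_def\<close>)
    then show ?thesis using pq by simp
  qed
  have pw: "kp (fst p) + gp (snd p) \<le> c p" if "p \<in> P" for p
  proof -
    obtain i j where p: "p = (i,j)" by (cases p)
    have b: "1 \<le> i \<and> i \<le> l \<and> 1 \<le> j \<and> j \<le> l" using wp_bounds[OF wp, of p] that p P_def by auto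
    have bb: "j \<le> i + w \<and> i \<le> j + w" using band that p P_def unfolding in_band_def by auto
    have H: "(if 4 \<le> i \<and> i + 3 \<le> l then kappa \<delta> l w A B i else 0)
       + (if 4 \<le> j \<and> j + 3 \<le> l then gamma \<delta> l w A B j else 0) \<le> \<delta> (A i) (B j)"
      by (rule pointwise[OF pos sym refl q]) (use b bb in auto)
    show ?thesis unfolding p kp_def gp_def c_def iR_def using H by (simp only: fst_conv snd_conv prod.case)
  qed
  have kp0: "\<And>i. 0 \<le> kp i" unfolding kp_def using kappa_nonneg[OF pos sym refl q] by simp
  have gp0: "\<And>i. 0 \<le> gp i" unfolding gp_def using gamma_nonneg[OF pos sym refl q] by simp
  have "sum (\<lambda>p. kp (fst p) + gp (snd p)) Md \<le> sum c Md"
    by (rule sum_mono) (use pw in \<open>auto simp: Md_def\<close>)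
  then have md: "sum (kp \<circ> fst) Md + sum (gp \<circ> snd) Md \<le> sum c Md"
    by (simp add: sum.distrib comp_def)
  have rows: "{4..l-3} \<subseteq> fst ` Md"
  proof
    fix i assume i: "i \<in> {4..l-3}"
    then have "1 \<le> i" "i \<le> l" by auto
    then obtain j where "(i,j) \<in> P" using wp_row[OF wp, of i] P_def by blast
    moreover have "iR i" using i l6 unfolding iR_def by auto
    ultimately show "i \<in> fst ` Md" unfolding Md_def by force
  qed
  have cols: "{4..l-3} \<subseteq> snd ` Md"
  proof
    fix j assume j: "j \<in> {4..l-3}"
    then have "1 \<le> j" "j \<le> l" by auto
    then obtain i where "(i,j) \<in> P" using wp_col[OF wp, of j] P_def by blast
    moreover have "iR j" using j l6 unfolding iR_def by auto
    ultimately show "j \<in> snd ` Md" unfolding Md_def by force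
  qed
  have "sum kp {4..l-3} \<le> sum kp (fst ` Md)"
    by (rule sum_mono2) (use finL rows kp0 in auto)
  also have "\<dots> \<le> sum (kp \<circ> fst) Md" by (rule sum_image_le) (use finL kp0 in auto)
  finally have k1: "sum kp {4..l-3} \<le> sum (kp \<circ> fst) Md" .
  have "sum gp {4..l-3} \<le> sum gp (snd ` Md)"
    by (rule sum_mono2) (use finL cols gp0 in auto)
  also have "\<dots> \<le> sum (gp \<circ> snd) Md" by (rule sum_image_le) (use finL gp0 in auto)
  finally have g1: "sum gp {4..l-3} \<le> sum (gp \<circ> snd) Md" .
  have k2: "sum kp {4..l-3} = (\<Sum>i = 4..l-3. kappa \<delta> l w A B i)"
    by (rule sum.cong) (use l6 in \<open>auto simp: kp_def iR_def\<close>)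
  have g2: "sum gp {4..l-3} = (\<Sum>i = 4..l-3. gamma \<delta> l w A B i)"
    by (rule sum.cong) (use l6 in \<open>auto simp: gp_def iR_def\<close>)
  show ?thesis
    unfolding LB_Webb_def cost mlr using spl left right md k1 g1 k2 g2 by linarith
qed

end

theorem theorem2:
  fixes \<delta> :: "real \<Rightarrow> real \<Rightarrow> real" and A B :: "nat \<Rightarrow> real" and l w :: nat
  assumes "l \<ge> 6"
    and "\<And>a b. \<delta> a b \<ge> 0"
    and "\<And>a b. \<delta> a b = \<delta> b a"
    and "\<And>a. \<delta> a a = 0"
    and "\<And>a b x y. (a \<le> x \<and> x \<le> y \<and> y \<le> b) \<or> (a \<ge> x \<and> x \<ge> y \<and> y \<ge> b) \<Longrightarrow>
           \<delta> a b \<ge> \<delta> a y + \<delta> b x - \<delta> x y"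
  shows "LB_Webb \<delta> l w A B \<le> DTW \<delta> l w A B"
proof -
  define W where "W = {ps. warping_path l ps \<and> in_band w ps}"
  have S: "{path_cost \<delta> A B ps | ps. warping_path l ps \<and> in_band w ps} = path_cost \<delta> A B ` W"
    unfolding W_def by blast
  have "W \<subseteq> {xs. set xs \<subseteq> {..l} \<times> {..l} \<and> length xs \<le> 2*l}"
  proof
    fix ps assume "ps \<in> W"
    then have wp: "warping_path l ps" unfolding W_def by simp
    show "ps \<in> {xs. set xs \<subseteq> {..l} \<times> {..l} \<and> length xs \<le> 2*l}"
      using wp_bounds[OF wp] wp_len[OF wp] by fastforce
  qed
  then have finW: "finite W" by (rule finite_subset) (rule finite_lists_length_le, simp)
  have neW: "W \<noteq> {}" using diag_wp[of l w] assms(1) unfolding W_def by auto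
  show ?thesis unfolding DTW_def S
  proof (rule Min.boundedI)
    show "finite (path_cost \<delta> A B ` W)" using finW by simp
    show "path_cost \<delta> A B ` W \<noteq> {}" using neW by simp
    fix x assume "x \<in> path_cost \<delta> A B ` W"
    then obtain ps where "ps \<in> W" "x = path_cost \<delta> A B ps" by auto
    then show "LB_Webb \<delta> l w A B \<le> x"
      using main_path[OF assms(2,3,4,5) assms(1)] unfolding W_def by auto
  qed
qed


end
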